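(* For every $d$ with $0\le d\le\rho(m)-1$, the sequence $(w(n,d))_{n\ge0}$ has transient length $\rho(m)\,(k-p_d-1)+d+1$ and cycle length $L_0(d)$.
   Context: For $u\in\mathbb{R}$ let $\mathbf 1[u]=1$ if $u\ge 0$ and $\mathbf 1[u]=0$ if $u<0$. For a $\{0,1\}$-valued sequence $(s(n))_{n\ge0}$ that is eventually periodic, its transient length is the least $T\ge0$ such that there is $P\ge1$ with $s(n+P)=s(n)$ for all $n\ge T$, and its cycle length is the least such $P$ (for that $T$). Let $m$ be a positive integer and let $\rho(m)$ denote the number of primes $p$ with $2m<p<3m$; assume $\rho(m)\ge 2$. List these primes as $p_0>p_1>\dots>p_{\rho(m)-1}$ and put $\alpha_i=3m-p_i$. Let $k=(6m-1)\rho(m)$, $\mu_i=\lfloor k/p_i\rfloor$, $\beta_i=k-p_i\mu_i$. Define weights $\bar a_j$, $1\le j\le k$: if $\rho(m)$ is even, $\bar a_j=2$ if $j=\ell p_i$ for some $i$ and some $\ell$ with $1\le \ell\le 3\rho(m)/2$, $\bar a_j=-2$ if $j=\ell p_i$ with $3\rho(m)/2<\ell\le 2\rho(m)$, and $\bar a_j=0$ otherwise; if $\rho(m)$ is odd, $\bar a_j=2$ if $j=\ell p_i$ with $1\le\ell\le (3\rho(m)-1)/2$, $\bar a_j=-2$ if $j=\ell p_i$ with $(3\rho(m)+1)/2\le \ell\le 2\rho(m)-2$, $\bar a_j=-1$ if $j=\ell p_i$ with $\ell\in\{2\rho(m)-1,2\rho(m)\}$, and $\bar a_j=0$ otherwise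 (well defined since the sets $\{\ell p_i:1\le\ell\le2\rho(m)\}$ are pairwise disjoint). Let $\bar\theta=2\rho(m)$. For each $i$ define $x^{\alpha_i}(t)$ for $0\le t\le k-1$ by $x^{\alpha_i}(t)=1$ if $t=\beta_i+\ell p_i$ for some $0\le \ell\le\mu_i-1$ and $x^{\alpha_i}(t)=0$ otherwise, and for $t\ge k$ by $x^{\alpha_i}(t)=\mathbf 1\big[\sum_{j=1}^k \bar a_j x^{\alpha_i}(t-j)-\bar\theta\big]$. Let $h=\rho(m)k$. For $1\le f\le h$ let $b_f=\bar a_j$ if $f=\rho(m)j$ with $1\le j\le k$, and $b_f=0$ otherwise. Define $(y(n))_{n\ge0}$ by $y(\rho(m)j+i)=x^{\alpha_i}(1+j)$ for $0\le j\le k-1$, $0\le i\le\rho(m)-1$, and $y(n)=\mathbf 1\big[\sum_{f=1}^h b_f y(n-f)-\bar\theta\big]$ for $n\ge h$. Let $L_1(d)=\rho(m)\cdot\mathrm{lcm}(p_0,\dots,p_d)$ for $0\le d\le\rho(m)-1$; let $L_0(d)=\rho(m)\cdot\mathrm{lcm}(p_{d+1},\dots,p_{\rho(m)-1})$ if $0\le d\le\rho(m)-2$ and $L_0(\rho(m)-1)=1$. For $0\le d\le\rho(m)-1$ define $(w(n,d))_{n\ge0}$ by: for $0\le i\le d$, $w(\rho(m)j+i,d)=x^{\alpha_i}(1+j)$ for $0\le j\le k-2$ and $w(\rho(m)(k-1)+i,d)=1-x^{\alpha_i}(k)$; for $d+1\le i\le\rho(m)-1$ and $0\le j\le k-1$,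 $w(\rho(m)j+i,d)=y(\rho(m)j+i+L_1(d))$; and $w(n,d)=\mathbf 1\big[\sum_{f=1}^h b_f w(n-f,d)-\bar\theta\big]$ for $n\ge h$. *)

theory Defs
  imports "HOL-Computational_Algebra.Primes"
begin

definition one :: "int \<Rightarrow> int" where
  "one u = (if u \<ge> 0 then 1 else 0)"

function thr_seq :: "nat \<Rightarrow> (nat \<Rightarrow> int) \<Rightarrow> (nat \<Rightarrow> int) \<Rightarrow> int \<Rightarrow> nat \<Rightarrow> int" where
  "thr_seq h init a theta n =
     (if n < h then init n
      else one ((\<Sum>f=1..h. a f * thr_seq h init a theta (n - f)) - theta))"
  by pat_completeness auto
termination
  by (relation "measure (\<lambda>(h, init, a, theta, n). n)") auto

definition is_period :: "(nat \<Rightarrow> 'a) \<Rightarrow> nat \<Rightarrow> nat \<Rightarrow> bool" where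
  "is_period s T P \<longleftrightarrow> P \<ge> 1 \<and> (\<forall>n\<ge>T. s (n + P) = s n)"

definition eventually_periodic :: "(nat \<Rightarrow> 'a) \<Rightarrow> bool" where
  "eventually_periodic s \<longleftrightarrow> (\<exists>T P. is_period s T P)"

definition transient_length :: "(nat \<Rightarrow> 'a) \<Rightarrow> nat" where
  "transient_length s = (LEAST T. \<exists>P. is_period s T P)"

definition cycle_length :: "(nat \<Rightarrow> 'a) \<Rightarrow> nat" where
  "cycle_length s = (LEAST P. is_period s (transient_length s) P)"

definition primes_between :: "nat \<Rightarrow> nat set" where
  "primes_between m = {p. prime p \<and> 2 * m < p \<and> p < 3 * m}"

definition rho :: "nat \<Rightarrow> nat" where
  "rho m = card (primes_between m)"

definition pr :: "nat \<Rightarrow> nat \<Rightarrow> nat" where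
  "pr m i = rev (sorted_list_of_set (primes_between m)) ! i"

definition kk :: "nat \<Rightarrow> nat" where
  "kk m = (6 * m - 1) * rho m"

definition mu :: "nat \<Rightarrow> nat \<Rightarrow> nat" where
  "mu m i = kk m div pr m i"

definition beta :: "nat \<Rightarrow> nat \<Rightarrow> nat" where
  "beta m i = kk m - pr m i * mu m i"

definition abar :: "nat \<Rightarrow> nat \<Rightarrow> int" where
  "abar m j =
    (if even (rho m) then
       (if \<exists>i<rho m. \<exists>l. 1 \<le> l \<and> 2 * l \<le> 3 * rho m \<and> j = l * pr m i then 2
        else if \<exists>i<rho m. \<exists>l. 3 * rho m < 2 * l \<and> l \<le> 2 * rho m \<and> j = l * pr m i then -2
        else 0)
     else
       (if \<exists>i<rho m. \<exists>l. 1 \<le> l \<and> 2 * l \<le> 3 * rho m - 1 \<and> j = l * pr m i then 2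
        else if \<exists>i<rho m. \<exists>l. 3 * rho m + 1 \<le> 2 * l \<and> l \<le> 2 * rho m - 2 \<and> j = l * pr m i then -2
        else if \<exists>i<rho m. \<exists>l. (l = 2 * rho m - 1 \<or> l = 2 * rho m) \<and> j = l * pr m i then -1
        else 0))"

definition theta_bar :: "nat \<Rightarrow> int" where
  "theta_bar m = 2 * int (rho m)"

definition xa :: "nat \<Rightarrow> nat \<Rightarrow> nat \<Rightarrow> int" where
  "xa m i = thr_seq (kk m)
      (\<lambda>t. if \<exists>l<mu m i. t = beta m i + l * pr m i then 1 else 0)
      (abar m) (theta_bar m)"

definition hh :: "nat \<Rightarrow> nat" where
  "hh m = rho m * kk m"

definition bw :: "nat \<Rightarrow> nat \<Rightarrow> int" where
  "bw m f = (if \<exists>j. 1 \<le> j \<and> j \<le> kk m \<and> f = rho m * j then abar m (f div rho m) else 0)"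

definition y :: "nat \<Rightarrow> nat \<Rightarrow> int" where
  "y m = thr_seq (hh m)
      (\<lambda>n. xa m (n mod rho m) (1 + n div rho m))
      (bw m) (theta_bar m)"

definition L1 :: "nat \<Rightarrow> nat \<Rightarrow> nat" where
  "L1 m d = rho m * Lcm (pr m ` {0..d})"

definition L0 :: "nat \<Rightarrow> nat \<Rightarrow> nat" where
  "L0 m d = (if d + 2 \<le> rho m then rho m * Lcm (pr m ` {d+1..rho m - 1}) else 1)"

definition w :: "nat \<Rightarrow> nat \<Rightarrow> nat \<Rightarrow> int" where
  "w m d = thr_seq (hh m)
      (\<lambda>n. let i = n mod rho m; j = n div rho m in
         if i \<le> d then
           (if j + 2 \<le> kk m then xa m i (1 + j) else 1 - xa m i (kk m))
         else y m (n + L1 m d))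
      (bw m) (theta_bar m)"

end

theory Submission
  imports Defs
begin


lemma finite_pb: "finite (primes_between m)"
  unfolding primes_between_def by (rule finite_subset[of _ "{..<3*m}"]) auto

lemma rho_le: "2 * rho m \<le> m"
proof -
  have "primes_between m \<subseteq> (\<lambda>a. 2*m+1+2*a) ` {..<m div 2}"
  proof
    fix p assume "p \<in> primes_between m"
    then have pp: "prime p" "2*m < p" "p < 3*m" by (auto simp: primes_between_def)
    then have "p > 2" by linarith
    then have "odd p" using pp(1) prime_odd_nat by blast
    then have "p = 2*(p div 2) + 1" by presburger
    moreover have "p div 2 \<ge> m" using pp(2) by linarith
    ultimately have "p = 2*m+1+2*(p div 2 - m)" by linarith
    then obtain a where "p = 2*m+1+2*a" by blast
    moreover have "a < m div 2" using pp(3) calculation by linarith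
    ultimately show "p \<in> (\<lambda>a. 2*m+1+2*a) ` {..<m div 2}" by auto
  qed
  then have "rho m \<le> card ((\<lambda>a. 2*m+1+2*a) ` {..<m div 2})"
    unfolding rho_def by (rule card_mono[rotated]) auto
  also have "\<dots> \<le> m div 2" using card_image_le[of "{..<m div 2}"] by auto
  finally show ?thesis by linarith
qed

lemma len_list: "length (rev (sorted_list_of_set (primes_between m))) = rho m"
  by (simp add: rho_def finite_pb)

lemma pr_mem: "i < rho m \<Longrightarrow> pr m i \<in> primes_between m"
  unfolding pr_def using len_list[of m]
  by (metis finite_pb nth_mem set_rev set_sorted_list_of_set)

lemma pr_prime: "i < rho m \<Longrightarrow> prime (pr m i)"
  and pr_lo: "i < rho m \<Longrightarrow> 2*m < pr m i"
  and pr_hi: "i < rho m \<Longrightarrow> pr m i < 3*m"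
  using pr_mem[of i m] by (auto simp: primes_between_def)

lemma pr_dec: assumes "i < j" "j < rho m" shows "pr m j < pr m i"
proof -
  let ?xs = "sorted_list_of_set (primes_between m)"
  have s: "sorted_wrt (<) ?xs" by (simp add: strict_sorted_list_of_set)
  have l: "length ?xs = rho m" by (simp add: rho_def finite_pb)
  have "?xs ! (rho m - 1 - j) < ?xs ! (rho m - 1 - i)"
    using sorted_wrt_nth_less[OF s, of "rho m - 1 - j" "rho m - 1 - i"] assms l by auto
  then show ?thesis unfolding pr_def using assms l by (simp add: rev_nth)
qed

lemma pr_inj: "i < rho m \<Longrightarrow> j < rho m \<Longrightarrow> pr m i = pr m j \<Longrightarrow> i = j"
  using pr_dec by (metis less_irrefl nat_neq_iff)

lemma pr_mono: "i \<le> j \<Longrightarrow> j < rho m \<Longrightarrow> pr m j \<le> pr m i"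
  using pr_dec by (metis le_less)



definition gw :: "nat \<Rightarrow> nat \<Rightarrow> int" where
  "gw r l = (if even r then (if 2*l \<le> 3*r then 2 else -2)
             else (if 2*l \<le> 3*r - 1 then 2 else if l \<le> 2*r-2 then -2 else -1))"

lemma uniq:
  assumes "i < rho m" "i' < rho m" "1 \<le> l'" "l' \<le> 2 * rho m" "l * pr m i = l' * pr m i'"
  shows "i = i' \<and> l = l'"
proof (cases "i = i'")
  case True
  then show ?thesis using assms pr_prime[of i m] by (auto simp: prime_gt_0_nat)
next
  case False
  have pi: "prime (pr m i)" "prime (pr m i')" using assms pr_prime by auto
  have ne: "pr m i \<noteq> pr m i'" using False pr_inj assms by blast
  have "pr m i dvd l' * pr m i'" using assms(5) by (metis dvd_triv_right)
  then have "pr m i dvd l'" using pi ne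
    by (metis prime_dvd_mult_iff primes_dvd_imp_eq)
  then have "pr m i \<le> l'" using assms(3) by (simp add: dvd_imp_le)
  moreover have "2*m < pr m i" using pr_lo assms by auto
  moreover have "2 * rho m \<le> m" by (rule rho_le)
  ultimately show ?thesis using assms(4) by linarith
qed

lemma abar_nz:
  assumes "abar m j \<noteq> 0"
  shows "\<exists>i<rho m. \<exists>l. 1 \<le> l \<and> l \<le> 2 * rho m \<and> j = l * pr m i"
proof -
  let ?G = "\<exists>i<rho m. \<exists>l. 1 \<le> l \<and> l \<le> 2 * rho m \<and> j = l * pr m i"
  define C1 where "C1 \<longleftrightarrow> (\<exists>i<rho m. \<exists>l. 1 \<le> l \<and> 2 * l \<le> 3 * rho m \<and> j = l * pr m i)"
  define C2 where "C2 \<longleftrightarrow> (\<exists>i<rho m. \<exists>l. 3 * rho m < 2 * l \<and> l \<le> 2 * rho m \<and> j = l * pr m i)"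
  define C3 where "C3 \<longleftrightarrow> (\<exists>i<rho m. \<exists>l. 1 \<le> l \<and> 2 * l \<le> 3 * rho m - 1 \<and> j = l * pr m i)"
  define C4 where "C4 \<longleftrightarrow> (\<exists>i<rho m. \<exists>l. 3 * rho m + 1 \<le> 2 * l \<and> l \<le> 2 * rho m - 2 \<and> j = l * pr m i)"
  define C5 where "C5 \<longleftrightarrow> (\<exists>i<rho m. \<exists>l. (l = 2 * rho m - 1 \<or> l = 2 * rho m) \<and> j = l * pr m i)"
  have c1: ?G if C1
  proof -
    from that[unfolded C1_def] obtain i l where "i < rho m" "1 \<le> l \<and> 2 * l \<le> 3 * rho m" "j = l * pr m i" by blast
    moreover have "1 \<le> l" "l \<le> 2 * rho m" using calculation(1,2) by (auto; linarith)+
    ultimately show ?G by blast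
  qed
  have c2: ?G if C2
  proof -
    from that[unfolded C2_def] obtain i l where "i < rho m" "3 * rho m < 2 * l \<and> l \<le> 2 * rho m" "j = l * pr m i" by blast
    moreover have "1 \<le> l" "l \<le> 2 * rho m" using calculation(1,2) by (auto; linarith)+
    ultimately show ?G by blast
  qed
  have c3: ?G if C3
  proof -
    from that[unfolded C3_def] obtain i l where "i < rho m" "1 \<le> l \<and> 2 * l \<le> 3 * rho m - 1" "j = l * pr m i" by blast
    moreover have "1 \<le> l" "l \<le> 2 * rho m" using calculation(1,2) by (auto; linarith)+
    ultimately show ?G by blast
  qed
  have c4: ?G if C4
  proof -
    from that[unfolded C4_def] obtain i l where "i < rho m" "3 * rho m + 1 \<le> 2 * l \<and> l \<le> 2 * rho m - 2" "j = l * pr m i" by blast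
    moreover have "1 \<le> l" "l \<le> 2 * rho m" using calculation(1,2) by (auto; linarith)+
    ultimately show ?G by blast
  qed
  have c5: ?G if C5
  proof -
    from that[unfolded C5_def] obtain i l where "i < rho m" "(l = 2 * rho m - 1 \<or> l = 2 * rho m)" "j = l * pr m i" by blast
    moreover have "1 \<le> l" "l \<le> 2 * rho m" using calculation(1,2) by (auto; linarith)+
    ultimately show ?G by blast
  qed
  have A: "abar m j = (if even (rho m) then (if C1 then 2 else if C2 then -2 else 0)
      else (if C3 then 2 else if C4 then -2 else if C5 then -1 else 0))"
    unfolding abar_def C1_def C2_def C3_def C4_def C5_def by (rule refl)
  have "C1 \<or> C2 \<or> C3 \<or> C4 \<or> C5" using assms unfolding A by (auto split: if_splits)
  then show ?thesis using c1 c2 c3 c4 c5 by blast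
qed

lemma abar_le2: "abar m j \<le> 2"
  unfolding abar_def by auto

lemma abar_big:
  assumes "i < rho m" "2 * rho m < l"
  shows "abar m (l * pr m i) = 0"
proof (rule ccontr)
  assume "abar m (l * pr m i) \<noteq> 0"
  then obtain i' l' where "i' < rho m" "1 \<le> l'" "l' \<le> 2 * rho m" "l * pr m i = l' * pr m i'"
    using abar_nz by blast
  then show False using uniq[of i m i' l' l] assms by auto
qed

lemma abar_mult:
  assumes "rho m \<ge> 2" "i < rho m" "1 \<le> l" "l \<le> 2 * rho m"
  shows "abar m (l * pr m i) = gw (rho m) l"
proof -
  have U: "\<And>i' l'. i' < rho m \<Longrightarrow> 1 \<le> l' \<Longrightarrow> l' \<le> 2 * rho m \<Longrightarrow> l * pr m i = l' * pr m i' \<Longrightarrow> i' = i \<and> l' = l"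
    using uniq[of i m _ _ l] assms by metis
  have H: "(\<exists>i'<rho m. \<exists>l'. P l' \<and> l * pr m i = l' * pr m i') \<longleftrightarrow> P l"
    if "\<And>l'. P l' \<Longrightarrow> 1 \<le> l' \<and> l' \<le> 2 * rho m" for P
  proof
    assume "\<exists>i'<rho m. \<exists>l'. P l' \<and> l * pr m i = l' * pr m i'"
    then obtain i' l' where "i' < rho m" "P l'" "l * pr m i = l' * pr m i'" by blast
    then show "P l" using U[of i' l'] that[of l'] by auto
  next
    assume "P l" then show "\<exists>i'<rho m. \<exists>l'. P l' \<and> l * pr m i = l' * pr m i'"
      using assms by blast
  qed
  have H3: "(\<exists>i'<rho m. \<exists>l'. A l' \<and> B l' \<and> l * pr m i = l' * pr m i') \<longleftrightarrow> A l \<and> B l"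
    if "\<And>l'. A l' \<Longrightarrow> B l' \<Longrightarrow> 1 \<le> l' \<and> l' \<le> 2 * rho m" for A B
    using H[of "\<lambda>l'. A l' \<and> B l'"] that by auto
  show ?thesis
  proof (cases "even (rho m)")
    case True
    have e1: "(\<exists>i'<rho m. \<exists>l'. 1 \<le> l' \<and> 2 * l' \<le> 3 * rho m \<and> l * pr m i = l' * pr m i') \<longleftrightarrow> 1 \<le> l \<and> 2*l \<le> 3 * rho m"
      by (rule H3) auto
    have e2: "(\<exists>i'<rho m. \<exists>l'. 3 * rho m < 2 * l' \<and> l' \<le> 2 * rho m \<and> l * pr m i = l' * pr m i') \<longleftrightarrow> 3 * rho m < 2*l \<and> l \<le> 2 * rho m"
      by (rule H3) auto
    show ?thesis using True e1 e2 assms(3,4) unfolding abar_def gw_def by auto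
  next
    case False
    have e1: "(\<exists>i'<rho m. \<exists>l'. 1 \<le> l' \<and> 2 * l' \<le> 3 * rho m - 1 \<and> l * pr m i = l' * pr m i') \<longleftrightarrow> 1 \<le> l \<and> 2*l \<le> 3 * rho m - 1"
      by (rule H3) auto
    have e2: "(\<exists>i'<rho m. \<exists>l'. 3 * rho m + 1 \<le> 2 * l' \<and> l' \<le> 2 * rho m - 2 \<and> l * pr m i = l' * pr m i') \<longleftrightarrow> 3 * rho m + 1 \<le> 2 * l \<and> l \<le> 2 * rho m - 2"
      by (rule H3) auto
    have e3: "(\<exists>i'<rho m. \<exists>l'. (l' = 2 * rho m - 1 \<or> l' = 2 * rho m) \<and> l * pr m i = l' * pr m i') \<longleftrightarrow> (l = 2 * rho m - 1 \<or> l = 2 * rho m)"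
      using assms by (rule_tac H) auto
    have "odd (3 * rho m)" using False by simp
    then have "2*l \<noteq> 3 * rho m" by (metis dvd_triv_left)
    then show ?thesis using False e1 e2 e3 assms unfolding abar_def gw_def by auto
  qed
qed



definition Sg :: "nat \<Rightarrow> nat \<Rightarrow> int" where
  "Sg r s = (if even r then (if 2*s \<le> 3*r then 2*int s else 6*int r - 2*int s)
     else (if 2*s \<le> 3*r - 1 then 2*int s else if s \<le> 2*r-2 then 6*int r - 2 - 2*int s
       else if s = 2*r - 1 then 2*int r + 1 else 2 * int r))"

lemma gsum_closed:
  assumes "r \<ge> 2" "s \<le> 2*r"
  shows "(\<Sum>l=1..s. gw r l) = Sg r s"
  using assms(2)
proof (induction s)
  case 0
  then show ?case by (simp add: Sg_def)
next
  case (Suc s)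
  have "(\<Sum>l=1..Suc s. gw r l) = (\<Sum>l=1..s. gw r l) + gw r (Suc s)" by simp
  also have "\<dots> = Sg r s + gw r (Suc s)" using Suc by simp
  also have "\<dots> = Sg r (Suc s)"
  proof (cases "even r")
    case True
    then obtain q where q: "r = 2*q" by blast
    show ?thesis unfolding Sg_def gw_def using True Suc.prems assms(1) unfolding q by auto
  next
    case False
    then obtain q where q: "r = 2*q+1" using oddE by blast
    show ?thesis unfolding Sg_def gw_def using False Suc.prems assms(1) unfolding q by auto
  qed
  finally show ?case .
qed

lemma gsum_total: "r \<ge> 2 \<Longrightarrow> (\<Sum>l=1..2*r. gw r l) = 2 * int r"
  by (subst gsum_closed) (auto simp: Sg_def)

lemma gsum_pos: "r \<ge> 2 \<Longrightarrow> 1 \<le> s \<Longrightarrow> s \<le> 2*r \<Longrightarrow> (\<Sum>l=1..s. gw r l) \<ge> 1"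
  by (subst gsum_closed) (auto simp: Sg_def)

lemma gsum_tail:
  assumes "r \<ge> 2" "1 \<le> s"
  shows "(\<Sum>l=s+1..2*r. gw r l) \<le> 2 * int r - 1"
proof (cases "s \<le> 2*r")
  case True
  have "{1..2*r} = {1..s} \<union> {s+1..2*r}" using True by auto
  then have "(\<Sum>l=1..2*r. gw r l) = (\<Sum>l=1..s. gw r l) + (\<Sum>l=s+1..2*r. gw r l)"
    by (simp add: sum.union_disjoint[symmetric] ivl_disj_int)
  then show ?thesis using gsum_total[OF assms(1)] gsum_pos[OF assms(1,2) True] by linarith
next
  case False
  then show ?thesis using assms by simp
qed



lemma k_big: "i < rho m \<Longrightarrow> 2 * rho m * pr m i + rho m \<le> kk m"
proof -
  assume i: "i < rho m"
  have "pr m i + 1 \<le> 3*m" using pr_hi[OF i] by linarith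
  then have "2 * pr m i + 1 \<le> 6*m - 1" by linarith
  then have "rho m * (2 * pr m i + 1) \<le> rho m * (6*m - 1)" by (rule mult_left_mono) simp
  then show ?thesis unfolding kk_def by (simp add: algebra_simps)
qed

lemma mod_cancel: assumes "(u1::nat) + j1 = u2 + j2" "u1 mod p = u2 mod p" shows "j1 mod p = j2 mod p"
proof -
  have a: "int u1 mod int p = int u2 mod int p" using assms(2) by (metis of_nat_mod)
  have "int j1 = int (u2 + j2) - int u1" using assms(1) by simp
  then have "int j1 mod int p = (int (u2 + j2) - int u1) mod int p" by simp
  also have "\<dots> = (int (u2 + j2) - int u2) mod int p" by (rule mod_diff_cong[OF refl a])
  also have "\<dots> = int j2 mod int p" by simp
  finally show ?thesis by (metis of_nat_mod of_nat_eq_iff)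
qed

lemma mod_add_same_iff: "((u::nat) + j) mod p = u mod p \<longleftrightarrow> p dvd j"
  using mod_eq_dvd_iff_nat[of u "u+j" p] by simp

lemma mult_sum:
  assumes "rho m \<ge> 2" "i < rho m"
  shows "(\<Sum>j\<in>{j\<in>{1..kk m}. pr m i dvd j \<and> s * pr m i < j}. abar m j) = (\<Sum>l=s+1..2*rho m. gw (rho m) l)"
proof -
  let ?p = "pr m i"
  have p0: "?p > 0" using pr_prime[OF assms(2)] prime_gt_0_nat by blast
  have kb: "2 * rho m * ?p \<le> kk m" using k_big[OF assms(2)] by linarith
  have "2 * rho m \<le> kk m div ?p" using kb p0 by (simp add: less_eq_div_iff_mult_less_eq)
  have S: "{j\<in>{1..kk m}. ?p dvd j \<and> s * ?p < j} = (\<lambda>l. l * ?p) ` {s+1..kk m div ?p}"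
  proof (rule set_eqI, rule iffI)
    fix j assume j: "j \<in> {j\<in>{1..kk m}. ?p dvd j \<and> s * ?p < j}"
    then obtain l where l: "j = l * ?p" by (auto elim: dvdE simp: mult.commute)
    have "s < l" using j l p0 by auto
    moreover have "l \<le> kk m div ?p" using j l p0 by (simp add: less_eq_div_iff_mult_less_eq)
    ultimately show "j \<in> (\<lambda>l. l * ?p) ` {s+1..kk m div ?p}" using l by auto
  next
    fix j assume "j \<in> (\<lambda>l. l * ?p) ` {s+1..kk m div ?p}"
    then obtain l where l: "j = l * ?p" "s+1 \<le> l" "l \<le> kk m div ?p" by (force simp del: mult_cancel_right)
    have "l * ?p \<le> kk m" using l(3) p0 by (simp add: less_eq_div_iff_mult_less_eq)
    moreover have "s * ?p < l * ?p" using l(2) p0 by simp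
    moreover have "1 \<le> l * ?p" using l(2) p0 by simp
    ultimately show "j \<in> {j\<in>{1..kk m}. ?p dvd j \<and> s * ?p < j}" using l(1) by auto
  qed
  have inj: "inj_on (\<lambda>l. l * ?p) {s+1..kk m div ?p}" using p0 by (auto simp: inj_on_def)
  have "(\<Sum>j\<in>{j\<in>{1..kk m}. ?p dvd j \<and> s * ?p < j}. abar m j) = (\<Sum>l\<in>{s+1..kk m div ?p}. abar m (l * ?p))"
    unfolding S by (rule sum.reindex[OF inj, unfolded comp_def])
  also have "\<dots> = (\<Sum>l\<in>{s+1..kk m div ?p}. if l \<le> 2 * rho m then gw (rho m) l else 0)"
    by (rule sum.cong) (auto simp: abar_mult[OF assms] abar_big[OF assms(2)])
  also have "\<dots> = (\<Sum>l\<in>{s+1..2 * rho m}. gw (rho m) l)"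
  proof -
    have "(\<Sum>l\<in>{s+1..kk m div ?p}. if l \<le> 2 * rho m then gw (rho m) l else 0)
        = (\<Sum>l\<in>{s+1..2 * rho m}. if l \<le> 2 * rho m then gw (rho m) l else 0)"
      by (rule sum.mono_neutral_right) (use \<open>2 * rho m \<le> kk m div ?p\<close> in auto)
    then show ?thesis by simp
  qed
  finally show ?thesis .
qed



lemma same_l:
  assumes "rho m \<ge> 2" "i < rho m" "i' < rho m" "i' \<noteq> i"
    "l2 \<le> l1" "l1 \<le> 2 * rho m"
    "(l1 * pr m i') mod pr m i = (l2 * pr m i') mod pr m i"
  shows "l1 = l2"
proof -
  let ?p = "pr m i" and ?q = "pr m i'"
  have pp: "prime ?p" "prime ?q" using pr_prime assms by auto
  have ne: "?p \<noteq> ?q" using pr_inj assms by metis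
  have "?p dvd l1 * ?q - l2 * ?q"
    using mod_eq_dvd_iff_nat[of "l2 * ?q" "l1 * ?q" ?p] assms(5,7) by (simp add: mult_le_mono1)
  then have "?p dvd (l1 - l2) * ?q" by (simp add: diff_mult_distrib)
  then have d: "?p dvd (l1 - l2)" using pp ne by (metis prime_dvd_mult_iff primes_dvd_imp_eq)
  have "l1 - l2 < ?p" using pr_lo[OF assms(2)] rho_le[of m] assms(6) by linarith
  then have "l1 - l2 = 0" using d by (metis dvd_imp_le not_less neq0_conv)
  then show ?thesis using assms(5) by simp
qed

lemma off_sum:
  assumes "rho m \<ge> 2" "i < rho m" "finite A"
    "\<forall>j1\<in>A. \<forall>j2\<in>A. j1 mod pr m i = j2 mod pr m i" "\<forall>j\<in>A. \<not> pr m i dvd j"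
  shows "(\<Sum>j\<in>A. abar m j) \<le> 2 * (int (rho m) - 1)"
proof -
  define N where "N = {j\<in>A. abar m j \<noteq> 0}"
  have fN: "finite N" using assms(3) N_def by simp
  have "(\<Sum>j\<in>A. abar m j) = (\<Sum>j\<in>N. abar m j)"
    unfolding N_def by (rule sum.mono_neutral_right) (use assms(3) in auto)
  also have "\<dots> \<le> (\<Sum>j\<in>N. 2)" by (rule sum_mono) (rule abar_le2)
  also have "\<dots> = 2 * int (card N)" by simp
  finally have s1: "(\<Sum>j\<in>A. abar m j) \<le> 2 * int (card N)" .
  define f where "f j = (SOME i'. i' < rho m \<and> (\<exists>l. 1 \<le> l \<and> l \<le> 2 * rho m \<and> j = l * pr m i'))" for j
  have fprop: "f j < rho m \<and> (\<exists>l. 1 \<le> l \<and> l \<le> 2 * rho m \<and> j = l * pr m (f j))" if "j \<in> N" for j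
  proof -
    have "abar m j \<noteq> 0" using that N_def by auto
    then have "\<exists>i'. i' < rho m \<and> (\<exists>l. 1 \<le> l \<and> l \<le> 2 * rho m \<and> j = l * pr m i')"
      using abar_nz by blast
    then show ?thesis unfolding f_def by (rule someI_ex)
  qed
  have fne: "f j \<noteq> i" if "j \<in> N" for j
  proof
    assume "f j = i"
    then have "pr m i dvd j" using fprop[OF that] by (metis dvd_triv_right)
    then show False using assms(5) that N_def by auto
  qed
  have inj: "inj_on f N"
  proof (rule inj_onI)
    fix j1 j2 assume j: "j1 \<in> N" "j2 \<in> N" "f j1 = f j2"
    obtain l1 where l1: "1 \<le> l1" "l1 \<le> 2 * rho m" "j1 = l1 * pr m (f j1)" using fprop[OF j(1)] by blast
    obtain l2 where l2: "1 \<le> l2" "l2 \<le> 2 * rho m" "j2 = l2 * pr m (f j1)" using fprop[OF j(2)] j(3) by auto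
    have md: "j1 mod pr m i = j2 mod pr m i" using assms(4) j N_def by auto
    have fl: "f j1 < rho m" "f j1 \<noteq> i" using fprop[OF j(1)] fne[OF j(1)] by auto
    have "l1 = l2"
    proof (cases "l2 \<le> l1")
      case True
      then show ?thesis using same_l[OF assms(1,2) fl(1,2) True l1(2)] md l1(3) l2(3) by simp
    next
      case False
      then show ?thesis using same_l[OF assms(1,2) fl(1,2) _ l2(2), of l1] md l1(3) l2(3) by simp
    qed
    then show "j1 = j2" using l1 l2 by simp
  qed
  have "f ` N \<subseteq> {..<rho m} - {i}" using fprop fne by auto
  then have "card N \<le> card ({..<rho m} - {i})"
    using card_inj_on_le[OF inj] by blast
  also have "\<dots> = rho m - 1" using assms(2) by simp
  finally have "int (card N) \<le> int (rho m) - 1" using assms(1) by linarith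
  then have "2 * int (card N) \<le> 2 * (int (rho m) - 1)" by simp
  from order_trans[OF s1 this] show ?thesis .
qed



definition Ppat :: "nat \<Rightarrow> nat \<Rightarrow> nat \<Rightarrow> nat \<Rightarrow> int" where
  "Ppat p a c t = (if (t + a) mod p = c mod p then 1 else 0)"

definition Tpat :: "nat \<Rightarrow> nat \<Rightarrow> nat \<Rightarrow> int" where
  "Tpat p k t = (if (t + 1) mod p = k mod p \<and> t + 1 < k then 1 else 0)"

lemma win: "(\<Sum>j=1..(k::nat). f j * (if Q j then 1 else (0::int))) = (\<Sum>j\<in>{j\<in>{1..k}. Q j}. f j)"
  by (subst sum.inter_filter) (auto intro: sum.cong)

lemma shift_iff:
  assumes "j \<le> t"
  shows "(t - j + a) mod p = (t + a) mod p \<longleftrightarrow> p dvd (j::nat)"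
proof -
  have "(t - j + a) + j = t + a" using assms by simp
  then show ?thesis using mod_add_same_iff[of "t - j + a" j p] by metis
qed

lemma stepP:
  assumes "rho m \<ge> 2" "i < rho m" "kk m \<le> t"
  shows "one ((\<Sum>j=1..kk m. abar m j * Ppat (pr m i) a c (t - j)) - theta_bar m) = Ppat (pr m i) a c t"
proof -
  let ?p = "pr m i" and ?k = "kk m"
  define S where "S = {j\<in>{1..?k}. (t - j + a) mod ?p = c mod ?p}"
  have sum_eq: "(\<Sum>j=1..?k. abar m j * Ppat ?p a c (t - j)) = (\<Sum>j\<in>S. abar m j)"
    unfolding Ppat_def S_def by (rule win)
  show ?thesis
  proof (cases "(t + a) mod ?p = c mod ?p")
    case True
    have "S = {j\<in>{1..?k}. ?p dvd j \<and> 0 * ?p < j}"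
      unfolding S_def using shift_iff[of _ t a ?p] True assms(3) by auto
    then have "(\<Sum>j\<in>S. abar m j) = 2 * int (rho m)"
      using mult_sum[OF assms(1,2), of 0] gsum_total[OF assms(1)] by simp
    then show ?thesis using True sum_eq by (simp add: one_def theta_bar_def Ppat_def)
  next
    case False
    have h1: "\<forall>j1\<in>S. \<forall>j2\<in>S. j1 mod ?p = j2 mod ?p"
    proof (intro ballI)
      fix j1 j2 assume j: "j1 \<in> S" "j2 \<in> S"
      have "(t - j1 + a) + j1 = (t - j2 + a) + j2" using j assms(3) unfolding S_def by auto
      moreover have "(t - j1 + a) mod ?p = (t - j2 + a) mod ?p" using j unfolding S_def by auto
      ultimately show "j1 mod ?p = j2 mod ?p" by (rule mod_cancel)
    qed
    have h2: "\<forall>j\<in>S. \<not> ?p dvd j"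
    proof (intro ballI notI)
      fix j assume j: "j \<in> S" "?p dvd j"
      then have "j \<le> t" using assms(3) unfolding S_def by auto
      then have "(t - j + a) mod ?p = (t + a) mod ?p" using shift_iff[of j t a ?p] j(2) by blast
      then show False using False j(1) unfolding S_def by auto
    qed
    have "(\<Sum>j\<in>S. abar m j) \<le> 2 * (int (rho m) - 1)"
      by (rule off_sum[OF assms(1,2) _ h1 h2]) (simp add: S_def)
    then show ?thesis using False sum_eq by (simp add: one_def theta_bar_def Ppat_def)
  qed
qed

lemma stepT:
  assumes "rho m \<ge> 2" "i < rho m" "kk m \<le> t"
  shows "one ((\<Sum>j=1..kk m. abar m j * Tpat (pr m i) (kk m) (t - j)) - theta_bar m) = Tpat (pr m i) (kk m) t"
proof -
  let ?p = "pr m i" and ?k = "kk m"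
  have p0: "?p > 0" using pr_prime[OF assms(2)] prime_gt_0_nat by blast
  define S where "S = {j\<in>{1..?k}. (t - j + 1) mod ?p = ?k mod ?p \<and> t - j + 1 < ?k}"
  have sum_eq: "(\<Sum>j=1..?k. abar m j * Tpat ?p ?k (t - j)) = (\<Sum>j\<in>S. abar m j)"
    unfolding Tpat_def S_def by (rule win)
  have T0: "Tpat ?p ?k t = 0" using assms(3) by (simp add: Tpat_def)
  have "(\<Sum>j\<in>S. abar m j) < 2 * int (rho m)"
  proof (cases "(t + 1) mod ?p = ?k mod ?p")
    case True
    have "?p dvd (t + 1 - ?k)" using mod_eq_dvd_iff_nat[of ?k "t+1" ?p] True assms(3) by simp
    then obtain s where s: "t + 1 - ?k = s * ?p" by (metis dvdE mult.commute)
    have s1: "1 \<le> s" using s assms(3) by (cases s) auto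
    have "S = {j\<in>{1..?k}. ?p dvd j \<and> s * ?p < j}"
      unfolding S_def using shift_iff[of _ t 1 ?p] True assms(3) s by auto
    then have "(\<Sum>j\<in>S. abar m j) = (\<Sum>l=s+1..2*rho m. gw (rho m) l)"
      using mult_sum[OF assms(1,2), of s] by simp
    then show ?thesis using gsum_tail[OF assms(1) s1] by simp
  next
    case False
    have h1: "\<forall>j1\<in>S. \<forall>j2\<in>S. j1 mod ?p = j2 mod ?p"
    proof (intro ballI)
      fix j1 j2 assume j: "j1 \<in> S" "j2 \<in> S"
      have "(t - j1 + 1) + j1 = (t - j2 + 1) + j2" using j assms(3) unfolding S_def by auto
      moreover have "(t - j1 + 1) mod ?p = (t - j2 + 1) mod ?p" using j unfolding S_def by auto
      ultimately show "j1 mod ?p = j2 mod ?p" by (rule mod_cancel)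
    qed
    have h2: "\<forall>j\<in>S. \<not> ?p dvd j"
    proof (intro ballI notI)
      fix j assume j: "j \<in> S" "?p dvd j"
      then have "j \<le> t" using assms(3) unfolding S_def by auto
      then have "(t - j + 1) mod ?p = (t + 1) mod ?p" using shift_iff[of j t 1 ?p] j(2) by blast
      then show False using False j(1) unfolding S_def by auto
    qed
    have "(\<Sum>j\<in>S. abar m j) \<le> 2 * (int (rho m) - 1)"
      by (rule off_sum[OF assms(1,2) _ h1 h2]) (simp add: S_def)
    then show ?thesis by simp
  qed
  then show ?thesis using sum_eq T0 by (simp add: one_def theta_bar_def)
qed



lemma thr_eq:
  assumes "\<forall>n<h. init n = Z n"
    "\<forall>n\<ge>h. one ((\<Sum>f=1..h. a f * Z (n - f)) - th) = Z n"
  shows "thr_seq h init a th n = Z n"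
proof (induction n rule: less_induct)
  case (less n)
  show ?case
  proof (cases "n < h")
    case True
    then show ?thesis using assms(1) by (subst thr_seq.simps) simp
  next
    case False
    have "(\<Sum>f=1..h. a f * thr_seq h init a th (n - f)) = (\<Sum>f=1..h. a f * Z (n - f))"
      by (rule sum.cong[OF refl]) (use False less.IH in auto)
    then show ?thesis using False assms(2) by (subst thr_seq.simps) simp
  qed
qed

lemma beta_mod: "beta m i = kk m mod pr m i"
  unfolding beta_def mu_def by (simp add: minus_mult_div_eq_mod)

lemma xa_closed:
  assumes "rho m \<ge> 2" "i < rho m"
  shows "xa m i t = Ppat (pr m i) 0 (kk m) t"
proof -
  let ?p = "pr m i" and ?k = "kk m"
  have p0: "?p > 0" using pr_prime[OF assms(2)] prime_gt_0_nat by blast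
  have init: "(if \<exists>l<mu m i. n = beta m i + l * ?p then 1 else 0) = Ppat ?p 0 ?k n" if "n < ?k" for n
  proof -
    have "(\<exists>l<mu m i. n = beta m i + l * ?p) \<longleftrightarrow> n mod ?p = ?k mod ?p"
    proof
      assume "\<exists>l<mu m i. n = beta m i + l * ?p"
      then obtain l where "n = beta m i + l * ?p" by blast
      then show "n mod ?p = ?k mod ?p" by (simp add: beta_mod)
    next
      assume h: "n mod ?p = ?k mod ?p"
      have e: "n = beta m i + (n div ?p) * ?p" using h by (metis beta_mod mod_div_mult_eq)
      have "n div ?p < mu m i"
      proof (rule ccontr)
        assume "\<not> n div ?p < mu m i"
        then have "mu m i * ?p \<le> (n div ?p) * ?p" by simp
        then have "beta m i + mu m i * ?p \<le> n" using e by linarith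
        moreover have "beta m i + mu m i * ?p = ?k" unfolding beta_mod mu_def by (rule mod_div_mult_eq)
        ultimately show False using that by simp
      qed
      then show "\<exists>l<mu m i. n = beta m i + l * ?p" using e by blast
    qed
    then show ?thesis by (simp add: Ppat_def)
  qed
  show ?thesis unfolding xa_def
    by (rule thr_eq) (use init stepP[OF assms] in auto)
qed

lemma dec_sum:
  assumes "rho m > 0"
  shows "(\<Sum>f=1..rho m * kk m. bw m f * F (n - f)) = (\<Sum>j=1..kk m. abar m j * F (n - rho m * j))"
proof -
  let ?r = "rho m" and ?k = "kk m"
  have inj: "inj_on (\<lambda>j. ?r * j) {1..?k}" using assms by (auto simp: inj_on_def)
  have r1: "Suc 0 \<le> ?r" using assms by simp
  have bwj: "bw m (?r * j) = abar m j" if "j \<in> {1..?k}" for j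
    using that r1 unfolding bw_def by auto
  have "(\<Sum>f\<in>(\<lambda>j. ?r * j) ` {1..?k}. bw m f * F (n - f)) = (\<Sum>j=1..?k. bw m (?r * j) * F (n - ?r * j))"
    by (rule sum.reindex[OF inj, unfolded comp_def])
  also have "\<dots> = (\<Sum>j=1..?k. abar m j * F (n - ?r * j))"
    by (rule sum.cong[OF refl]) (simp add: bwj)
  finally have "(\<Sum>j=1..?k. abar m j * F (n - ?r * j)) = (\<Sum>f\<in>(\<lambda>j. ?r * j) ` {1..?k}. bw m f * F (n - f))" by simp
  also have "\<dots> = (\<Sum>f=1..?r * ?k. bw m f * F (n - f))"
    by (rule sum.mono_neutral_left) (use r1 in \<open>auto simp: bw_def\<close>)
  finally show ?thesis by simp
qed

lemma thr_dec:
  assumes "rho m \<ge> 2"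
    "\<forall>i<rho m. \<forall>t\<ge>kk m. one ((\<Sum>j=1..kk m. abar m j * Pat i (t - j)) - theta_bar m) = Pat i t"
    "\<forall>n<rho m * kk m. init n = Pat (n mod rho m) (n div rho m)"
  shows "thr_seq (hh m) init (bw m) (theta_bar m) n = Pat (n mod rho m) (n div rho m)"
proof -
  let ?r = "rho m" and ?k = "kk m"
  have r0: "?r > 0" using assms(1) by simp
  have step: "one ((\<Sum>f=1..?r * ?k. bw m f * Pat ((n - f) mod ?r) ((n - f) div ?r)) - theta_bar m)
      = Pat (n mod ?r) (n div ?r)" if "?r * ?k \<le> n" for n
  proof -
    define i where "i = n mod ?r"
    define J where "J = n div ?r"
    have nJ: "n = ?r * J + i" unfolding i_def J_def by simp
    have ir: "i < ?r" unfolding i_def using r0 by simp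
    have kJ: "?k \<le> J" unfolding J_def using that r0 by (simp add: less_eq_div_iff_mult_less_eq mult.commute)
    have "(\<Sum>f=1..?r * ?k. bw m f * Pat ((n - f) mod ?r) ((n - f) div ?r))
        = (\<Sum>j=1..?k. abar m j * Pat ((n - ?r * j) mod ?r) ((n - ?r * j) div ?r))"
      by (rule dec_sum[OF r0])
    also have "\<dots> = (\<Sum>j=1..?k. abar m j * Pat i (J - j))"
    proof (rule sum.cong[OF refl])
      fix j assume j: "j \<in> {1..?k}"
      have "n - ?r * j = ?r * (J - j) + i" using nJ j kJ by (simp add: diff_mult_distrib2)
      then show "abar m j * Pat ((n - ?r * j) mod ?r) ((n - ?r * j) div ?r) = abar m j * Pat i (J - j)"
        using ir r0 by simp
    qed
    finally show ?thesis using assms(2) ir kJ unfolding i_def J_def by simp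
  qed
  show ?thesis unfolding hh_def
    by (rule thr_eq[where Z="\<lambda>n. Pat (n mod rho m) (n div rho m)"]) (use assms(3) step in auto)
qed

lemma y_closed:
  assumes "rho m \<ge> 2"
  shows "y m n = Ppat (pr m (n mod rho m)) 1 (kk m) (n div rho m)"
proof -
  have r0: "rho m > 0" using assms by simp
  show ?thesis unfolding y_def
  proof (rule thr_dec[OF assms])
    show "\<forall>i<rho m. \<forall>t\<ge>kk m. one ((\<Sum>j = 1..kk m. abar m j * Ppat (pr m i) 1 (kk m) (t - j)) - theta_bar m) = Ppat (pr m i) 1 (kk m) t"
      using stepP[OF assms] by blast
    show "\<forall>n<rho m * kk m. xa m (n mod rho m) (1 + n div rho m) = Ppat (pr m (n mod rho m)) 1 (kk m) (n div rho m)"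
      using xa_closed[OF assms] r0 by (simp add: Ppat_def add.commute)
  qed
qed



definition Wpat :: "nat \<Rightarrow> nat \<Rightarrow> nat \<Rightarrow> nat \<Rightarrow> int" where
  "Wpat m d i t = (if i \<le> d then Tpat (pr m i) (kk m) t
     else Ppat (pr m i) (1 + Lcm (pr m ` {0..d})) (kk m) t)"

lemma w_closed:
  assumes "rho m \<ge> 2"
  shows "w m d n = Wpat m d (n mod rho m) (n div rho m)"
proof -
  let ?r = "rho m" and ?k = "kk m" and ?L = "Lcm (pr m ` {0..d})"
  have r0: "?r > 0" using assms by simp
  show ?thesis unfolding w_def
  proof (rule thr_dec[OF assms])
    show "\<forall>i<rho m. \<forall>t\<ge>kk m. one ((\<Sum>j = 1..kk m. abar m j * Wpat m d i (t - j)) - theta_bar m) = Wpat m d i t"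
      using stepP[OF assms] stepT[OF assms] unfolding Wpat_def by auto
    show "\<forall>n<rho m * kk m. (let i = n mod rho m; j = n div rho m in
         if i \<le> d then (if j + 2 \<le> kk m then xa m i (1 + j) else 1 - xa m i (kk m))
         else y m (n + L1 m d)) = Wpat m d (n mod rho m) (n div rho m)"
    proof (intro allI impI)
      fix n assume n: "n < ?r * ?k"
      define i where "i = n mod ?r"
      define j where "j = n div ?r"
      have ir: "i < ?r" unfolding i_def using r0 by simp
      have jk: "j < ?k" unfolding j_def using n r0 by (simp add: div_less_iff_less_mult mult.commute)
      have "(if i \<le> d then (if j + 2 \<le> ?k then xa m i (1 + j) else 1 - xa m i ?k)
         else y m (n + L1 m d)) = Wpat m d i j"
      proof (cases "i \<le> d")
        case True
        show ?thesis
        proof (cases "j + 2 \<le> ?k")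
          case True
          then show ?thesis using \<open>i \<le> d\<close> xa_closed[OF assms ir]
            by (simp add: Wpat_def Tpat_def Ppat_def add.commute)
        next
          case False
          then have "j + 1 = ?k" using jk by simp
          then show ?thesis using \<open>i \<le> d\<close> False xa_closed[OF assms ir]
            by (simp add: Wpat_def Tpat_def Ppat_def)
        qed
      next
        case False
        have "n + L1 m d = ?r * (j + ?L) + i" unfolding L1_def i_def j_def
          by (simp add: algebra_simps)
        then have "(n + L1 m d) mod ?r = i" "(n + L1 m d) div ?r = j + ?L"
          using ir r0 by simp_all
        then show ?thesis using False y_closed[OF assms, of "n + L1 m d"]
          by (simp add: Wpat_def Ppat_def add.commute add.left_commute)
      qed
      then show "(let i = n mod rho m; j = n div rho m in
         if i \<le> d then (if j + 2 \<le> kk m then xa m i (1 + j) else 1 - xa m i (kk m))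
         else y m (n + L1 m d)) = Wpat m d (n mod rho m) (n div rho m)"
        unfolding i_def j_def Let_def .
    qed
  qed
qed



lemma iter_period:
  assumes "is_period s T P" "T \<le> n"
  shows "s (n + q * P) = s n"
proof (induction q)
  case 0 then show ?case by simp
next
  case (Suc q)
  have "s (n + q * P + P) = s (n + q * P)" using assms unfolding is_period_def by auto
  have e: "n + Suc q * P = n + q * P + P" by simp
  show ?case unfolding e using Suc \<open>s (n + q * P + P) = s (n + q * P)\<close> by (simp only:)
qed

definition T0 :: "nat \<Rightarrow> nat \<Rightarrow> nat" where
  "T0 m d = rho m * (kk m - pr m d - 1) + d + 1"

lemma p_pos: "i < rho m \<Longrightarrow> pr m i > 0"
  using pr_prime prime_gt_0_nat by blast

lemma k_pd: "rho m \<ge> 2 \<Longrightarrow> i < rho m \<Longrightarrow> pr m i + 2 \<le> kk m"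
proof -
  assume a: "rho m \<ge> 2" "i < rho m"
  have "2 * rho m * pr m i + rho m \<le> kk m" by (rule k_big[OF a(2)])
  moreover have "2 * 2 * pr m i \<le> 2 * rho m * pr m i" using a(1) by simp
  ultimately show ?thesis using p_pos[OF a(2)] by linarith
qed

lemma W_zero:
  assumes "rho m \<ge> 2" "d < rho m" "T0 m d \<le> n" "n mod rho m \<le> d"
  shows "w m d n = 0"
proof -
  let ?r = "rho m" and ?k = "kk m"
  define i where "i = n mod ?r"
  define j where "j = n div ?r"
  have r0: "?r > 0" using assms by simp
  have nij: "n = ?r * j + i" unfolding i_def j_def by simp
  have id: "i \<le> d" using assms(4) i_def by simp
  have "?r * (?k - pr m d - 1) < ?r * j"
    using assms(3) nij id unfolding T0_def by linarith
  then have jb: "?k - pr m d - 1 < j" by simp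
  have pm: "pr m d \<le> pr m i" using pr_mono[OF id assms(2)] .
  have kp: "pr m d + 2 \<le> ?k" using k_pd[OF assms(1,2)] .
  have "\<not> ((j + 1) mod pr m i = ?k mod pr m i \<and> j + 1 < ?k)"
  proof
    assume h: "(j + 1) mod pr m i = ?k mod pr m i \<and> j + 1 < ?k"
    then have "pr m i dvd ?k - (j + 1)" using mod_eq_dvd_iff_nat[of "j+1" ?k "pr m i"] by simp
    then have "pr m i \<le> ?k - (j + 1)" using h by (simp add: dvd_imp_le)
    then show False using jb pm kp h by linarith
  qed
  then show ?thesis using w_closed[OF assms(1), of d n] id
    unfolding i_def[symmetric] j_def[symmetric] Wpat_def Tpat_def by simp
qed

lemma W_one:
  assumes "rho m \<ge> 2" "d < rho m"
  shows "w m d (T0 m d - 1) = 1"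
proof -
  let ?r = "rho m" and ?k = "kk m" and ?p = "pr m d"
  have e: "T0 m d - 1 = ?r * (?k - ?p - 1) + d" unfolding T0_def by simp
  have kp: "?p + 2 \<le> ?k" using k_pd[OF assms(1,2)] .
  have p0: "?p > 0" using p_pos[OF assms(2)] .
  have m1: "(T0 m d - 1) mod ?r = d" "(T0 m d - 1) div ?r = ?k - ?p - 1"
    unfolding e using assms by simp_all
  have "(?k - ?p - 1 + 1) mod ?p = ?k mod ?p"
    using kp le_mod_geq[of ?p ?k] by (simp add: Suc_diff_Suc)
  moreover have "?k - ?p - 1 + 1 < ?k" using kp p0 by linarith
  ultimately show ?thesis using w_closed[OF assms(1), of d "T0 m d - 1"]
    unfolding m1 Wpat_def Tpat_def by simp
qed

lemma W_class_one:
  assumes "rho m \<ge> 2" "d < i" "i < rho m"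
  shows "\<exists>n\<ge>N. n mod rho m = i \<and> w m d n = 1"
proof -
  let ?r = "rho m" and ?k = "kk m" and ?p = "pr m i" and ?L = "Lcm (pr m ` {0..d})"
  have p0: "?p > 0" using p_pos[OF assms(3)] .
  define j where "j = (?p - 1) * (1 + ?L) + ?k + ?p * N"
  define n where "n = ?r * j + i"
  have pm: "(?p - 1) * (1 + ?L) + (1 + ?L) = ?p * (1 + ?L)" using p0 by (cases ?p) auto
  have "j + (1 + ?L) = ?k + ?p * (1 + ?L + N)" unfolding j_def using pm
    by (simp add: algebra_simps)
  then have "(j + (1 + ?L)) mod ?p = ?k mod ?p" by (metis mod_mult_self2)
  moreover have "n mod ?r = i" "n div ?r = j" unfolding n_def using assms by simp_all
  moreover have "N \<le> n"
  proof -
    have "N \<le> ?p * N" using p0 by simp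
    also have "\<dots> \<le> j" unfolding j_def by simp
    also have "j \<le> ?r * j" using assms by simp
    finally show ?thesis unfolding n_def by simp
  qed
  ultimately show ?thesis using w_closed[OF assms(1), of d n] assms(2)
    by (intro exI[of _ n]) (simp add: Wpat_def Ppat_def)
qed



lemma L0_pos:
  assumes "rho m \<ge> 2" "d + 2 \<le> rho m"
  shows "Lcm (pr m ` {d+1..rho m - 1}) > 0"
proof -
  have "0 \<notin> pr m ` {d+1..rho m - 1}"
  proof
    assume "0 \<in> pr m ` {d+1..rho m - 1}"
    then obtain i where i: "i \<in> {d+1..rho m - 1}" "pr m i = 0" by (metis imageE)
    then have "i < rho m" using assms by auto
    from p_pos[OF this] i(2) show False by simp
  qed
  moreover have "finite (pr m ` {d+1..rho m - 1})" by simp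
  ultimately show ?thesis by (metis not_gr_zero Lcm_0_iff)
qed

lemma W_period:
  assumes "rho m \<ge> 2" "d < rho m"
  shows "is_period (w m d) (T0 m d) (L0 m d)"
proof (cases "d + 2 \<le> rho m")
  case True
  let ?r = "rho m" and ?M = "Lcm (pr m ` {d+1..rho m - 1})"
  have M0: "?M > 0" using L0_pos[OF assms(1) True] .
  have L: "L0 m d = ?r * ?M" using True unfolding L0_def by simp
  show ?thesis unfolding is_period_def
  proof (intro conjI allI impI)
    show "1 \<le> L0 m d" using L M0 assms by simp
    fix n assume n: "T0 m d \<le> n"
    define i where "i = n mod ?r"
    define j where "j = n div ?r"
    have nij: "n = ?r * j + i" unfolding i_def j_def by simp
    have ir: "i < ?r" using assms i_def by simp
    have e: "n + L0 m d = ?r * (j + ?M) + i" using nij L by (simp add: algebra_simps)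
    have m1: "(n + L0 m d) mod ?r = i" "(n + L0 m d) div ?r = j + ?M" unfolding e using ir by simp_all
    show "w m d (n + L0 m d) = w m d n"
    proof (cases "i \<le> d")
      case True
      have "w m d n = 0" using W_zero[OF assms n] True i_def by simp
      moreover have "w m d (n + L0 m d) = 0" using W_zero[OF assms, of "n + L0 m d"] True m1 n by simp
      ultimately show ?thesis by simp
    next
      case False
      have "pr m i dvd ?M" by (rule dvd_Lcm) (use False ir in auto)
      then obtain c where c: "?M = pr m i * c" by (auto elim: dvdE)
      have "(j + ?M + (1 + Lcm (pr m ` {0..d}))) mod pr m i = (j + (1 + Lcm (pr m ` {0..d}))) mod pr m i"
      proof -
        have "j + ?M + (1 + Lcm (pr m ` {0..d})) = (j + (1 + Lcm (pr m ` {0..d}))) + pr m i * c"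
          unfolding c by simp
        then show ?thesis by (simp only: mod_mult_self2)
      qed
      then show ?thesis using w_closed[OF assms(1), of d n] w_closed[OF assms(1), of d "n + L0 m d"] False
        unfolding m1 i_def[symmetric] j_def[symmetric] by (simp add: Wpat_def Ppat_def)
    qed
  qed
next
  case False
  then have d: "d = rho m - 1" "L0 m d = 1" using assms unfolding L0_def by auto
  show ?thesis unfolding is_period_def
  proof (intro conjI allI impI)
    show "1 \<le> L0 m d" using d by simp
    fix n assume n: "T0 m d \<le> n"
    have "n mod rho m < rho m" "(n + L0 m d) mod rho m < rho m" using assms by simp_all
    then have nm: "n mod rho m \<le> d" "(n + L0 m d) mod rho m \<le> d" using d(1) by linarith+
    have "w m d n = 0" using W_zero[OF assms n nm(1)] .
    moreover have "w m d (n + L0 m d) = 0" using W_zero[OF assms _ nm(2)] n by simp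
    ultimately show "w m d (n + L0 m d) = w m d n" by simp
  qed
qed

lemma T0_mod:
  assumes "rho m \<ge> 2" "d < rho m"
  shows "(T0 m d - 1 + rho m * P) mod rho m = d"
proof -
  have "T0 m d - 1 + rho m * P = rho m * (kk m - pr m d - 1 + P) + d"
    unfolding T0_def by (simp add: algebra_simps)
  then show ?thesis using assms by simp
qed

lemma trans_eq:
  assumes "rho m \<ge> 2" "d < rho m"
  shows "transient_length (w m d) = T0 m d"
  unfolding transient_length_def
proof (rule Least_equality)
  show "\<exists>P. is_period (w m d) (T0 m d) P" using W_period[OF assms] by blast
next
  fix T assume "\<exists>P. is_period (w m d) T P"
  then obtain P where P: "is_period (w m d) T P" by blast
  show "T0 m d \<le> T"
  proof (rule ccontr)
    assume "\<not> T0 m d \<le> T"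
    then have T: "T \<le> T0 m d - 1" by simp
    have P1: "P \<ge> 1" using P unfolding is_period_def by simp
    have "w m d (T0 m d - 1 + rho m * P) = w m d (T0 m d - 1)"
      using iter_period[OF P T, of "rho m"] by (simp add: mult.commute)
    also have "\<dots> = 1" by (rule W_one[OF assms])
    finally have a: "w m d (T0 m d - 1 + rho m * P) = 1" .
    have "T0 m d \<le> T0 m d - 1 + rho m * P" using P1 assms by (simp add: T0_def)
    then have "w m d (T0 m d - 1 + rho m * P) = 0"
      using W_zero[OF assms] T0_mod[OF assms] by simp
    then show False using a by simp
  qed
qed



lemma choose_cc:
  fixes g r d :: nat
  assumes "0 < g" "g dvd r" "g < r" "d + 2 \<le> r"
  shows "\<exists>c c' e. d < c \<and> c < r \<and> c' \<le> d \<and> c' \<le> c \<and> e \<le> r \<and> e * g = c - c'"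
proof (cases "d + g < r")
  case True
  have "d < d+g \<and> d+g < r \<and> d \<le> d \<and> d \<le> d+g \<and> 1 \<le> r \<and> 1*g = d+g-d" using True assms by auto
  then show ?thesis by blast
next
  case False
  obtain q where q: "r = g * q" using assms(2) by (auto elim: dvdE)
  have "q \<noteq> 0" "q \<noteq> 1" using q assms by auto
  then have "q \<ge> 2" by simp
  then have "2 * g \<le> r" using q by simp
  have cm: "(r - 1) mod g < g" using assms(1) by simp
  have eq: "(r - 1) div g * g = (r - 1) - (r - 1) mod g" by (simp add: minus_mod_eq_div_mult)
  have "(r - 1) div g \<le> r" using div_le_dividend[of "r-1" g] by linarith
  moreover have "(r - 1) mod g \<le> r - 1" by (rule mod_le_divisor[THEN le_trans]) (use assms in auto)
  moreover have "(r - 1) mod g \<le> d" using cm False \<open>2 * g \<le> r\<close> by linarith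
  ultimately have "d < r - 1 \<and> r - 1 < r \<and> (r - 1) mod g \<le> d \<and> (r - 1) mod g \<le> r - 1 \<and> (r - 1) div g \<le> r
      \<and> (r - 1) div g * g = (r - 1) - (r - 1) mod g"
    using False assms cm eq \<open>2 * g \<le> r\<close> by auto
  then show ?thesis by blast
qed

lemma r_dvd_Q:
  assumes "rho m \<ge> 2" "d + 2 \<le> rho m" "is_period (w m d) (T0 m d) Q"
  shows "rho m dvd Q"
proof (rule ccontr)
  assume nd: "\<not> rho m dvd Q"
  let ?r = "rho m"
  have dr: "d < ?r" using assms by simp
  define g where "g = gcd Q ?r"
  have Q0: "Q \<noteq> 0" using assms(3) unfolding is_period_def by simp
  have g0: "0 < g" unfolding g_def using Q0 by simp
  have gd: "g dvd ?r" unfolding g_def by simp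
  have gne: "g \<noteq> ?r" using nd unfolding g_def by (metis gcd_dvd1)
  have gr: "g < ?r" using gd gne assms(1) by (simp add: dvd_imp_le le_neq_implies_less)
  obtain c c' e where cc: "d < c" "c < ?r" "c' \<le> d" "c' \<le> c" "e \<le> ?r" "e * g = c - c'"
    using choose_cc[OF g0 gd gr assms(2)] by blast
  obtain n where n: "T0 m d \<le> n" "n mod ?r = c" "w m d n = 1"
    using W_class_one[OF assms(1) cc(1) cc(2), of "T0 m d"] by blast
  obtain x y where xy: "Q * x = ?r * y + g" using bezout_nat[OF Q0, of ?r] g_def by blast
  define E where "E = ?r - e"
  have Eg: "E * g + (c - c') = ?r * g" unfolding E_def cc(6)[symmetric] using cc(5)
    by (simp add: add_mult_distrib[symmetric])
  have tQ: "(x * E) * Q = ?r * (E * y) + E * g" using xy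
    by (metis add_mult_distrib2 mult.assoc mult.commute mult.left_commute)
  have nn: "n = ?r * (n div ?r) + c" using n(2) by (metis mult_div_mod_eq)
  have c1: "c - c' < ?r" using cc by linarith
  have c2: "?r \<le> ?r * g" using g0 by simp
  have key: "n + (x * E) * Q = ?r * (n div ?r + E * y + g) + c'"
  proof -
    have "n + (x * E) * Q = ?r * (n div ?r) + c + ?r * (E * y) + E * g" using nn tQ by linarith
    also have "\<dots> = ?r * (n div ?r) + ?r * (E * y) + ?r * g + c'" using Eg cc(4) by linarith
    also have "\<dots> = ?r * (n div ?r + E * y + g) + c'" by (simp add: algebra_simps)
    finally show ?thesis .
  qed
  have md: "(n + (x * E) * Q) mod ?r = c'" unfolding key using cc(3) dr by simp
  have "w m d (n + (x * E) * Q) = w m d n" by (rule iter_period[OF assms(3) n(1)])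
  moreover have "w m d (n + (x * E) * Q) = 0"
    by (rule W_zero[OF assms(1) dr]) (use n(1) md cc(3) in auto)
  ultimately show False using n(3) by simp
qed

lemma cyc_eq:
  assumes "rho m \<ge> 2" "d < rho m"
  shows "cycle_length (w m d) = L0 m d"
  unfolding cycle_length_def trans_eq[OF assms]
proof (rule Least_equality)
  show "is_period (w m d) (T0 m d) (L0 m d)" by (rule W_period[OF assms])
next
  fix Q assume Q: "is_period (w m d) (T0 m d) Q"
  have Q1: "1 \<le> Q" using Q unfolding is_period_def by simp
  show "L0 m d \<le> Q"
  proof (cases "d + 2 \<le> rho m")
    case False
    then show ?thesis using Q1 unfolding L0_def by simp
  next
    case True
    let ?r = "rho m" and ?M = "Lcm (pr m ` {d+1..rho m - 1})" and ?L = "Lcm (pr m ` {0..d})"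
    obtain q where q: "Q = ?r * q" using r_dvd_Q[OF assms(1) True Q] by (auto elim: dvdE)
    have q0: "q > 0" using q Q1 by (cases q) auto
    have allp: "\<forall>p\<in>pr m ` {d+1..rho m - 1}. p dvd q"
    proof
      fix p assume "p \<in> pr m ` {d+1..rho m - 1}"
      then obtain i where i0: "i \<in> {d+1..rho m - 1}" "p = pr m i" by blast
      then have i: "d < i" "i < ?r" "p = pr m i" using assms by auto
      obtain n where n: "T0 m d \<le> n" "n mod ?r = i" "w m d n = 1"
        using W_class_one[OF assms(1) i(1) i(2), of "T0 m d"] by blast
      define j where "j = n div ?r"
      have nj: "n = ?r * j + i" unfolding j_def using n(2) by (metis mult_div_mod_eq)
      have e: "n + Q = ?r * (j + q) + i" unfolding q nj by (simp add: algebra_simps)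
      have w2: "w m d (n + Q) = 1" using Q n unfolding is_period_def by simp
      have a1: "(j + (1 + ?L)) mod p = kk m mod p"
        using n(3) w_closed[OF assms(1), of d n] i n(2) unfolding j_def[symmetric]
        by (auto simp: Wpat_def Ppat_def split: if_splits)
      have a2: "(j + q + (1 + ?L)) mod p = kk m mod p"
        using w2 w_closed[OF assms(1), of d "n + Q"] i unfolding e
        by (auto simp: Wpat_def Ppat_def split: if_splits)
      have "((j + (1 + ?L)) + q) mod p = (j + (1 + ?L)) mod p"
        using a1 a2 by (simp add: ac_simps)
      then show "p dvd q" using mod_add_same_iff by blast
    qed
    have "?M dvd q" by (rule Lcm_least) (use allp in blast)
    then have "?M \<le> q" using q0 by (simp add: dvd_imp_le)
    then show ?thesis unfolding L0_def q using True by simp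
  qed
qed

theorem lemma13:
  fixes m :: nat
  assumes "0 < m" and "rho m \<ge> 2"
  shows "\<forall>d < rho m.
           eventually_periodic (\<lambda>n. w m d n) \<and>
           transient_length (\<lambda>n. w m d n) = rho m * (kk m - pr m d - 1) + d + 1 \<and>
           cycle_length (\<lambda>n. w m d n) = L0 m d"
proof (intro allI impI conjI)
  fix d assume d: "d < rho m"
  show "eventually_periodic (\<lambda>n. w m d n)"
    unfolding eventually_periodic_def using W_period[OF assms(2) d] by blast
  show "transient_length (\<lambda>n. w m d n) = rho m * (kk m - pr m d - 1) + d + 1"
    using trans_eq[OF assms(2) d] unfolding T0_def by simp
  show "cycle_length (\<lambda>n. w m d n) = L0 m d"
    using cyc_eq[OF assms(2) d] by simp
qed


end
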